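(* Let $\mathbf a=(a_i)$ and $\mathbf b=(b_i)$ be sequences in $\{0,1\}^{\mathbb N}$ with $a_1=0$ and $b_1=1$. Then: (1) $F(\mathbf a,\mathbf b)=\mathcal K(\sigma(\mathbf b),\sigma(\mathbf a))$; (2) $E(\mathbf a,\mathbf b)\cap[\sigma(\mathbf b),\sigma(\mathbf a)]=F(\mathbf a,\mathbf b)=\mathcal K(\sigma(\mathbf b),\sigma(\mathbf a))$; (3) $h_{top}(\mathcal K(\sigma(\mathbf b),\sigma(\mathbf a)),\sigma)=h_{top}(E(\mathbf a,\mathbf b),\sigma)$.
   Context: $\sigma$ denotes the left shift on $\{0,1\}^{\mathbb N}$ and $\prec,\preceq$ the lexicographic order; $[\mathbf x,\mathbf y]=\{\mathbf z\colon\mathbf x\preceq\mathbf z\preceq\mathbf y\}$. For $\mathbf t,\mathbf u\in\{0,1\}^{\mathbb N}$, $\mathcal K(\mathbf t,\mathbf u)=\{\mathbf x\colon\mathbf t\preceq\sigma^n(\mathbf x)\preceq\mathbf u\ \forall n\ge0\}$. $E(\mathbf a,\mathbf b)=\{\mathbf x\in\{0,1\}^{\mathbb N}\colon\text{for all }n\ge0,\ \sigma^n(\mathbf x)\preceq\mathbf a\text{ or }\mathbf b\preceq\sigma^n(\mathbf x)\}$. $F(\mathbf a,\mathbf b)=\{\mathbf x\in\{0,1\}^{\mathbb N}\colon\text{for all }n\ge0,\ \sigma(\mathbf b)\preceq\sigma^n(\mathbf x)\preceq\mathbf a\text{ or }\mathbf b\preceq\sigma^n(\mathbf x)\preceq\sigma(\mathbf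 a)\}$. $h_{top}$ is topological entropy. *)

theory Defs
  imports Complex_Main
begin

text \<open>Binary sequences indexed from 0: the paper's a_1 is a 0 here.\<close>
type_synonym seq = "nat \<Rightarrow> bool"

definition shift :: "seq \<Rightarrow> seq" where
  "shift x = (\<lambda>i. x (Suc i))"

definition lex_less :: "seq \<Rightarrow> seq \<Rightarrow> bool" where
  "lex_less x y \<longleftrightarrow> (\<exists>n. (\<forall>i<n. x i = y i) \<and> \<not> x n \<and> y n)"

definition lex_le :: "seq \<Rightarrow> seq \<Rightarrow> bool" where
  "lex_le x y \<longleftrightarrow> x = y \<or> lex_less x y"

definition lex_interval :: "seq \<Rightarrow> seq \<Rightarrow> seq set" where
  "lex_interval x y = {z. lex_le x z \<and> lex_le z y}"

definition Kset :: "seq \<Rightarrow> seq \<Rightarrow> seq set" where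
  "Kset t u = {x. \<forall>n. lex_le t ((shift ^^ n) x) \<and> lex_le ((shift ^^ n) x) u}"

definition Eset :: "seq \<Rightarrow> seq \<Rightarrow> seq set" where
  "Eset a b = {x. \<forall>n. lex_le ((shift ^^ n) x) a \<or> lex_le b ((shift ^^ n) x)}"

definition Fset :: "seq \<Rightarrow> seq \<Rightarrow> seq set" where
  "Fset a b = {x. \<forall>n.
     (lex_le (shift b) ((shift ^^ n) x) \<and> lex_le ((shift ^^ n) x) a) \<or>
     (lex_le b ((shift ^^ n) x) \<and> lex_le ((shift ^^ n) x) (shift a))}"

text \<open>Words of length n occurring as prefixes of points of X (for shift-invariant X these
  are exactly the n-blocks occurring in X).\<close>
definition words :: "nat \<Rightarrow> seq set \<Rightarrow> bool list set" where
  "words n X = (\<lambda>x. map x [0..<n]) ` X"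

definition htop :: "seq set \<Rightarrow> real" where
  "htop X = lim (\<lambda>n. ln (real (card (words n X))) / real n)"

end

theory Submission imports Defs "HOL-Real_Asymp.Real_Asymp" begin

lemma shift_app: "shift x i = x (Suc i)" by (simp add: shift_def)

lemma seq_eq_unfold: "x = y \<longleftrightarrow> x 0 = y 0 \<and> shift x = shift y"
proof
  assume "x 0 = y 0 \<and> shift x = shift y"
  then have "x i = y i" for i
    by (cases i) (auto simp: shift_def dest: fun_cong)
  then show "x = y" by auto
qed auto

lemma lex_less_unfold:
  "lex_less x y \<longleftrightarrow> (\<not> x 0 \<and> y 0) \<or> (x 0 = y 0 \<and> lex_less (shift x) (shift y))"
proof
  assume "lex_less x y"
  then obtain n where n: "\<forall>i<n. x i = y i" "\<not> x n" "y n" unfolding lex_less_def by blast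
  show "(\<not> x 0 \<and> y 0) \<or> (x 0 = y 0 \<and> lex_less (shift x) (shift y))"
  proof (cases n)
    case 0 then show ?thesis using n by auto
  next
    case (Suc m)
    then have "x 0 = y 0" using n by auto
    moreover have "lex_less (shift x) (shift y)" unfolding lex_less_def shift_def
      using n Suc by (intro exI[of _ m]) auto
    ultimately show ?thesis by auto
  qed
next
  assume "(\<not> x 0 \<and> y 0) \<or> (x 0 = y 0 \<and> lex_less (shift x) (shift y))"
  then show "lex_less x y"
  proof
    assume "\<not> x 0 \<and> y 0" then show ?thesis unfolding lex_less_def by (intro exI[of _ 0]) auto
  next
    assume h: "x 0 = y 0 \<and> lex_less (shift x) (shift y)"
    then obtain m where m: "\<forall>i<m. x (Suc i) = y (Suc i)" "\<not> x (Suc m)" "y (Suc m)"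
      unfolding lex_less_def shift_def by blast
    have "\<forall>i<Suc m. x i = y i"
    proof (intro allI impI)
      fix i assume "i < Suc m" then show "x i = y i" using h m by (cases i) auto
    qed
    then show ?thesis unfolding lex_less_def using m by blast
  qed
qed

lemma lex_le_unfold:
  "lex_le x y \<longleftrightarrow> (\<not> x 0 \<and> y 0) \<or> (x 0 = y 0 \<and> lex_le (shift x) (shift y))"
  unfolding lex_le_def using lex_less_unfold[of x y] seq_eq_unfold[of x y] by auto

lemma lex_less_trans: assumes "lex_less x y" "lex_less y z" shows "lex_less x z"
proof -
  obtain n where n: "\<forall>i<n. x i = y i" "\<not> x n" "y n" using assms(1) unfolding lex_less_def by blast
  obtain m where m: "\<forall>i<m. y i = z i" "\<not> y m" "z m" using assms(2) unfolding lex_less_def by blast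
  show ?thesis
  proof (cases n m rule: linorder_cases)
    case less then show ?thesis unfolding lex_less_def using n m by (intro exI[of _ n]) auto
  next
    case equal then show ?thesis using n m by auto
  next
    case greater then show ?thesis unfolding lex_less_def using n m by (intro exI[of _ m]) auto
  qed
qed

lemma lex_less_irrefl: "\<not> lex_less x x" unfolding lex_less_def by auto

lemma lex_le_trans: "lex_le x y \<Longrightarrow> lex_le y z \<Longrightarrow> lex_le x z"
  unfolding lex_le_def using lex_less_trans by blast

lemma lex_le_refl: "lex_le x x" unfolding lex_le_def by auto

lemma lex_total: "x = y \<or> lex_less x y \<or> lex_less y x"
proof (cases "x = y")
  case False
  then obtain j where "x j \<noteq> y j" by auto
  define n where "n = (LEAST i. x i \<noteq> y i)"
  have "x n \<noteq> y n" unfolding n_def by (rule LeastI) fact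
  moreover have "\<forall>i<n. x i = y i" unfolding n_def using not_less_Least by blast
  ultimately show ?thesis unfolding lex_less_def by (cases "x n") auto
qed auto

lemma lex_not_le: "\<not> lex_le x y \<longleftrightarrow> lex_less y x"
  unfolding lex_le_def using lex_total[of x y] lex_less_trans[of x y x] lex_less_irrefl[of x] by auto

lemma Z0: assumes "\<not> y 0" shows "lex_le y (shift y)"
proof (cases "\<exists>i. y i")
  case False
  then have "y = shift y" by (auto simp: shift_def)
  then show ?thesis by (simp add: lex_le_def)
next
  case True
  define k where "k = (LEAST i. y i)"
  have yk: "y k" unfolding k_def using True LeastI_ex by metis
  have lt: "\<forall>i<k. \<not> y i" unfolding k_def using not_less_Least by blast
  have k0: "k > 0" using yk assms by (cases k) auto
  have "lex_less y (shift y)" unfolding lex_less_def shift_def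
    using lt yk k0 by (intro exI[of _ "k - 1"]) auto
  then show ?thesis by (simp add: lex_le_def)
qed

lemma Z1: assumes "y 0" shows "lex_le (shift y) y"
proof (cases "\<exists>i. \<not> y i")
  case False
  then have "y = shift y" by (auto simp: shift_def)
  then show ?thesis by (simp add: lex_le_def)
next
  case True
  define k where "k = (LEAST i. \<not> y i)"
  have yk: "\<not> y k" unfolding k_def using True LeastI_ex by metis
  have lt: "\<forall>i<k. y i" unfolding k_def using not_less_Least by blast
  have k0: "k > 0" using yk assms by (cases k) auto
  have "lex_less (shift y) y" unfolding lex_less_def shift_def
    using lt yk k0 by (intro exI[of _ "k - 1"]) auto
  then show ?thesis by (simp add: lex_le_def)
qed

lemma L1: "\<not> y 0 \<Longrightarrow> lex_le u y \<Longrightarrow> lex_le u (shift y)"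
  using Z0 lex_le_trans by blast
lemma L2: "y 0 \<Longrightarrow> lex_le y u \<Longrightarrow> lex_le (shift y) u"
  using Z1 lex_le_trans by blast

lemma funpow_shift_Suc: "(shift ^^ Suc n) x = shift ((shift ^^ n) x)" by simp
lemma funpow_shift_app: "(shift ^^ n) x i = x (n + i)"
  by (induction n arbitrary: i) (auto simp: shift_def)
lemma funpow_shift_add: "(shift ^^ m) ((shift ^^ n) x) = (shift ^^ (m + n)) x"
  by (simp add: funpow_add)

lemma le_first: "lex_le x y \<Longrightarrow> \<not> y 0 \<Longrightarrow> \<not> x 0"
  using lex_le_unfold by blast
lemma le_first2: "lex_le x y \<Longrightarrow> x 0 \<Longrightarrow> y 0"
  using lex_le_unfold by blast

context
  fixes a b :: seq
  assumes a0: "\<not> a 0" and b0: "b 0"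
begin

lemma a_le: "lex_le a (shift a)" using Z0 a0 by blast
lemma b_le: "lex_le (shift b) b" using Z1 b0 by blast

lemma stepI:
  assumes "lex_le (shift b) y" "lex_le y (shift a)" "lex_le y a \<or> lex_le b y"
  shows "lex_le (shift b) (shift y) \<and> lex_le (shift y) (shift a)"
proof (cases "y 0")
  case False
  then have "lex_le (shift b) (shift y)" using L1 assms(1) by blast
  moreover have "lex_le y a" using assms(3) le_first2[of b y] b0 False by blast
  then have "lex_le (shift y) (shift a)" using lex_le_unfold[of y a] a0 False by auto
  ultimately show ?thesis by blast
next
  case True
  then have "lex_le (shift y) (shift a)" using L2 assms(2) by blast
  moreover have "lex_le b y" using assms(3) le_first2[of y a] a0 True by blast
  then have "lex_le (shift b) (shift y)" using lex_le_unfold[of b y] b0 True by auto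
  ultimately show ?thesis by blast
qed

lemma F_sub_K: "Fset a b \<subseteq> Kset (shift b) (shift a)"
  unfolding Fset_def Kset_def using lex_le_trans a_le b_le by blast

lemma K_sub_F: "Kset (shift b) (shift a) \<subseteq> Fset a b"
proof
  fix x assume "x \<in> Kset (shift b) (shift a)"
  then have K: "lex_le (shift b) ((shift ^^ n) x) \<and> lex_le ((shift ^^ n) x) (shift a)" for n
    unfolding Kset_def by blast
  have "(lex_le (shift b) ((shift ^^ n) x) \<and> lex_le ((shift ^^ n) x) a) \<or>
     (lex_le b ((shift ^^ n) x) \<and> lex_le ((shift ^^ n) x) (shift a))" for n
  proof (cases "(shift ^^ n) x 0")
    case False
    have "lex_le ((shift ^^ n) x) a" using K[of "Suc n"] False a0
      by (subst lex_le_unfold) simp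
    then show ?thesis using K[of n] by blast
  next
    case True
    have "lex_le b ((shift ^^ n) x)" using K[of "Suc n"] True b0
      by (subst lex_le_unfold) simp
    then show ?thesis using K[of n] by blast
  qed
  then show "x \<in> Fset a b" unfolding Fset_def by blast
qed

lemma F_sub_E: "Fset a b \<subseteq> Eset a b"
  unfolding Fset_def Eset_def by blast

lemma EI_sub_K: "Eset a b \<inter> lex_interval (shift b) (shift a) \<subseteq> Kset (shift b) (shift a)"
proof
  fix x assume x: "x \<in> Eset a b \<inter> lex_interval (shift b) (shift a)"
  have "lex_le (shift b) ((shift ^^ n) x) \<and> lex_le ((shift ^^ n) x) (shift a)" for n
  proof (induction n)
    case 0 then show ?case using x by (simp add: lex_interval_def)
  next
    case (Suc n)
    have "lex_le ((shift ^^ n) x) a \<or> lex_le b ((shift ^^ n) x)" using x unfolding Eset_def by blast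
    then show ?case using stepI Suc by simp
  qed
  then show "x \<in> Kset (shift b) (shift a)" unfolding Kset_def by blast
qed

lemma part2: "Eset a b \<inter> lex_interval (shift b) (shift a) = Fset a b"
proof
  show "Eset a b \<inter> lex_interval (shift b) (shift a) \<subseteq> Fset a b" using EI_sub_K K_sub_F by blast
  show "Fset a b \<subseteq> Eset a b \<inter> lex_interval (shift b) (shift a)"
  proof
    fix x assume "x \<in> Fset a b"
    then have "x \<in> Eset a b" "x \<in> Kset (shift b) (shift a)" using F_sub_E F_sub_K by blast+
    then show "x \<in> Eset a b \<inter> lex_interval (shift b) (shift a)"
      unfolding Kset_def lex_interval_def by (auto dest: spec[of _ 0])
  qed
qed

lemma stepB:
  assumes "lex_le y a \<or> lex_le b y" "lex_le (shift y) a \<or> lex_le b (shift y)"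
    "\<not> (lex_le (shift b) (shift y) \<and> lex_le (shift y) (shift a))"
  shows "y 0 = shift y 0"
proof (rule ccontr)
  assume ne: "y 0 \<noteq> shift y 0"
  show False
  proof (cases "y 0")
    case False
    then have s1: "shift y 0" using ne by simp
    have "lex_le b (shift y)" using assms(2) le_first2[of "shift y" a] a0 s1 by blast
    then have "lex_le (shift b) (shift y)" using b_le lex_le_trans by blast
    then have "\<not> lex_le (shift y) (shift a)" using assms(3) by blast
    moreover have "lex_le y a" using assms(1) le_first2[of b y] b0 False by blast
    then have "lex_le (shift y) (shift a)" using lex_le_unfold[of y a] a0 False by auto
    ultimately show False by blast
  next
    case True
    then have s1: "\<not> shift y 0" using ne by simp
    have "lex_le (shift y) a" using assms(2) le_first2[of b "shift y"] b0 s1 by blast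
    then have "lex_le (shift y) (shift a)" using a_le lex_le_trans by blast
    then have "\<not> lex_le (shift b) (shift y)" using assms(3) by blast
    moreover have "lex_le b y" using assms(1) le_first2[of y a] a0 True by blast
    then have "lex_le (shift b) (shift y)" using lex_le_unfold[of b y] b0 True by auto
    ultimately show False by blast
  qed
qed

lemma E_decomp:
  assumes x: "x \<in> Eset a b"
  shows "\<exists>c. (\<forall>i. x i = c) \<or> (\<exists>n. (\<forall>i<n. x i = c) \<and> (shift ^^ n) x \<in> Kset (shift b) (shift a))"
proof -
  let ?I = "\<lambda>n. lex_le (shift b) ((shift ^^ n) x) \<and> lex_le ((shift ^^ n) x) (shift a)"
  have E: "lex_le ((shift ^^ n) x) a \<or> lex_le b ((shift ^^ n) x)" for n
    using x unfolding Eset_def by blast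
  have eq: "x n = x (Suc n)" if "\<not> ?I (Suc n)" for n
  proof -
    have "(shift ^^ n) x 0 = shift ((shift ^^ n) x) 0"
      by (rule stepB[OF E[of n]]) (use E[of "Suc n"] that in \<open>simp_all only: funpow_shift_Suc simp_thms\<close>)
    then show ?thesis by (simp add: funpow_shift_app shift_app)
  qed
  have const: "x i = x 0" if "\<forall>j<n. \<not> ?I j" "i < n" for i n
    using that
  proof (induction i)
    case (Suc i)
    have "\<not> ?I (Suc i)" using Suc.prems by blast
    then have "x i = x (Suc i)" by (rule eq)
    then show ?case using Suc by simp
  qed simp
  show ?thesis
  proof (cases "\<exists>n. ?I n")
    case True
    define n where "n = (LEAST n. ?I n)"
    have In: "?I n" unfolding n_def by (rule LeastI_ex[OF True])
    have lt: "\<forall>j<n. \<not> ?I j" unfolding n_def using not_less_Least by blast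
    have "(shift ^^ n) x \<in> Eset a b" unfolding Eset_def
    proof (intro CollectI allI)
      fix m show "lex_le ((shift ^^ m) ((shift ^^ n) x)) a \<or> lex_le b ((shift ^^ m) ((shift ^^ n) x))"
        using E[of "m + n"] by (simp only: funpow_shift_add)
    qed
    moreover have "(shift ^^ n) x \<in> lex_interval (shift b) (shift a)"
      using In unfolding lex_interval_def by simp
    ultimately have "(shift ^^ n) x \<in> Kset (shift b) (shift a)"
      using EI_sub_K by blast
    moreover have "\<forall>i<n. x i = x 0" using const[OF lt] by blast
    ultimately show ?thesis by blast
  next
    case False
    then have "\<forall>i. x i = x 0" using const[of "Suc i" i for i] by simp
    then show ?thesis by blast
  qed
qed


lemma cardE_bound:
  "card (words N (Eset a b)) \<le> 2 + 2 * N * card (words N (Kset (shift b) (shift a)))"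
proof -
  let ?K = "Kset (shift b) (shift a)"
  let ?S = "range (\<lambda>c. replicate N c) \<union>
    (\<Union>n\<in>{..<N}. \<Union>c\<in>UNIV. (\<lambda>w. replicate n c @ w) ` words (N - n) ?K)"
  have sub: "words N (Eset a b) \<subseteq> ?S"
  proof
    fix l assume "l \<in> words N (Eset a b)"
    then obtain x where x: "x \<in> Eset a b" and l: "l = map x [0..<N]" unfolding words_def by blast
    obtain c where c: "(\<forall>i. x i = c) \<or> (\<exists>n. (\<forall>i<n. x i = c) \<and> (shift ^^ n) x \<in> ?K)"
      using E_decomp[OF x] by blast
    show "l \<in> ?S"
    proof (cases "\<exists>n<N. (\<forall>i<n. x i = c) \<and> (shift ^^ n) x \<in> ?K")
      case True
      then obtain n where n: "n < N" "\<forall>i<n. x i = c" "(shift ^^ n) x \<in> ?K" by blast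
      have "l = replicate n c @ map ((shift ^^ n) x) [0..<N - n]"
        unfolding l using n by (auto simp: list_eq_iff_nth_eq nth_append funpow_shift_app)
      moreover have "map ((shift ^^ n) x) [0..<N - n] \<in> words (N - n) ?K"
        unfolding words_def using n by blast
      ultimately show ?thesis using n by blast
    next
      case False
      note nf = False
      have "\<forall>i<N. x i = c"
      proof (intro allI impI)
        fix i assume i: "i < N"
        show "x i = c"
        proof (cases "\<forall>i. x i = c")
          case False
          then obtain n where "\<forall>i<n. x i = c" "(shift ^^ n) x \<in> ?K" using c by blast
          moreover have "\<not> n < N" using nf calculation by blast
          ultimately show ?thesis using i by simp
        qed simp
      qed
      then have "l = replicate N c" unfolding l by (auto simp: list_eq_iff_nth_eq)
      then show ?thesis by blast
    qed
  qed
  have finw: "finite (words n X)" for n X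
  proof (rule finite_subset)
    show "words n X \<subseteq> {xs. set xs \<subseteq> (UNIV::bool set) \<and> length xs = n}"
      unfolding words_def by auto
    show "finite {xs. set xs \<subseteq> (UNIV::bool set) \<and> length xs = n}"
      by (rule finite_lists_length_eq) simp
  qed
  have mono: "card (words m X) \<le> card (words N X)" if "m \<le> N" for m X
  proof -
    have "words m X = take m ` words N X"
      unfolding words_def image_image using that by (auto simp: take_map)
    then show ?thesis using card_image_le finw by metis
  qed
  have "card (words N (Eset a b)) \<le> card ?S"
  proof (rule card_mono[OF _ sub])
    show "finite ?S" by (simp add: finw)
  qed
  also have "\<dots> \<le> card (range (\<lambda>c::bool. replicate N c)) +
    card (\<Union>n\<in>{..<N}. \<Union>c\<in>UNIV. (\<lambda>w. replicate n c @ w) ` words (N - n) ?K)"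
    by (rule card_Un_le)
  also have "card (range (\<lambda>c::bool. replicate N c)) \<le> 2"
    using card_image_le[of "UNIV::bool set" "\<lambda>c. replicate N c"] by simp
  also have "card (\<Union>n\<in>{..<N}. \<Union>c\<in>UNIV. (\<lambda>w. replicate n c @ w) ` words (N - n) ?K)
     \<le> (\<Sum>n\<in>{..<N}. card (\<Union>c\<in>UNIV. (\<lambda>w. replicate n c @ w) ` words (N - n) ?K))"
    by (rule card_UN_le) simp
  also have "\<dots> \<le> (\<Sum>n\<in>{..<N}. 2 * card (words N ?K))"
  proof (rule sum_mono)
    fix n assume n: "n \<in> {..<N}"
    have "card (\<Union>c\<in>UNIV. (\<lambda>w. replicate n c @ w) ` words (N - n) ?K)
      \<le> (\<Sum>c\<in>UNIV. card ((\<lambda>w. replicate n c @ w) ` words (N - n) ?K))"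
      by (rule card_UN_le) simp
    also have "\<dots> \<le> (\<Sum>c\<in>(UNIV::bool set). card (words N ?K))"
    proof (rule sum_mono)
      fix c :: bool
      have "card ((\<lambda>w. replicate n c @ w) ` words (N - n) ?K) \<le> card (words (N - n) ?K)"
        by (rule card_image_le[OF finw])
      also have "\<dots> \<le> card (words N ?K)" by (rule mono) simp
      finally show "card ((\<lambda>w. replicate n c @ w) ` words (N - n) ?K) \<le> card (words N ?K)" .
    qed
    also have "\<dots> = 2 * card (words N ?K)" by simp
    finally show "card (\<Union>c\<in>UNIV. (\<lambda>w. replicate n c @ w) ` words (N - n) ?K) \<le> 2 * card (words N ?K)" .
  qed
  also have "\<dots> = 2 * N * card (words N ?K)" by simp
  finally show ?thesis by simp
qed

lemma htop_eq: "htop (Kset (shift b) (shift a)) = htop (Eset a b)"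
proof -
  let ?K = "Kset (shift b) (shift a)" and ?E = "Eset a b"
  define cK where "cK N = card (words N ?K)" for N
  define cE where "cE N = card (words N ?E)" for N
  define f where "f N = ln (real (cE N)) / real N" for N
  define g where "g N = ln (real (cK N)) / real N" for N
  have KE: "?K \<subseteq> ?E" using K_sub_F F_sub_E by blast
  have finw: "finite (words n X)" for n X
  proof (rule finite_subset)
    show "words n X \<subseteq> {xs. set xs \<subseteq> (UNIV::bool set) \<and> length xs = n}"
      unfolding words_def by auto
    show "finite {xs. set xs \<subseteq> (UNIV::bool set) \<and> length xs = n}"
      by (rule finite_lists_length_eq) simp
  qed
  have KEc: "cK N \<le> cE N" for N
    unfolding cK_def cE_def words_def by (rule card_mono) (use finw[unfolded words_def] KE in auto)
  have bnd: "cE N \<le> 2 + 2 * N * cK N" for N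
    unfolding cK_def cE_def by (rule cardE_bound)
  have diff: "0 \<le> ln (real (cE N)) - ln (real (cK N)) \<and>
      ln (real (cE N)) - ln (real (cK N)) \<le> ln (2 + 2 * real N)" if N: "N \<ge> 1" for N
  proof (cases "cK N = 0")
    case True
    then have "cE N \<le> 2" using bnd[of N] by simp
    then have "ln (real (cE N)) \<le> ln (2 + 2 * real N)"
      by (cases "cE N = 0") (auto intro!: ln_mono)
    moreover have "ln (real (cE N)) \<ge> 0" by (cases "cE N = 0") auto
    ultimately show ?thesis using True by simp
  next
    case False
    then have pos: "real (cK N) > 0" by simp
    have "real (cE N) \<le> (2 + 2 * real N) * real (cK N)"
    proof -
      have "real (cE N) \<le> 2 + 2 * real N * real (cK N)" using bnd[of N] by (metis of_nat_le_iff of_nat_add of_nat_mult of_nat_numeral)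
      also have "\<dots> \<le> (2 + 2 * real N) * real (cK N)" using False by (simp add: algebra_simps)
      finally show ?thesis .
    qed
    moreover have "real (cE N) > 0" using KEc[of N] pos by simp
    ultimately have "ln (real (cE N)) \<le> ln ((2 + 2 * real N) * real (cK N))" by (intro ln_mono) auto
    also have "\<dots> = ln (2 + 2 * real N) + ln (real (cK N))" using pos by (simp add: ln_mult)
    finally have u: "ln (real (cE N)) - ln (real (cK N)) \<le> ln (2 + 2 * real N)" by simp
    have "ln (real (cK N)) \<le> ln (real (cE N))" using KEc[of N] pos by (intro ln_mono) auto
    then show ?thesis using u by simp
  qed
  have lim0: "(\<lambda>N. f N - g N) \<longlonglongrightarrow> 0"
  proof (rule real_tendsto_sandwich[of "\<lambda>_. 0" _ _ "\<lambda>N. ln (2 + 2 * real N) / real N"])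
    show "\<forall>\<^sub>F N in sequentially. 0 \<le> f N - g N"
      using eventually_ge_at_top[of 1]
      by eventually_elim (use diff in \<open>auto simp: f_def g_def diff_divide_distrib[symmetric]\<close>)
    show "\<forall>\<^sub>F N in sequentially. f N - g N \<le> ln (2 + 2 * real N) / real N"
      using eventually_ge_at_top[of 1]
      by eventually_elim (use diff in \<open>auto simp: f_def g_def diff_divide_distrib[symmetric] intro!: divide_right_mono\<close>)
    show "(\<lambda>_. 0) \<longlonglongrightarrow> (0::real)" by simp
    show "(\<lambda>N. ln (2 + 2 * real N) / real N) \<longlonglongrightarrow> 0" by real_asymp
  qed
  have iff: "(f \<longlonglongrightarrow> L) = (g \<longlonglongrightarrow> L)" for L
  proof
    assume "f \<longlonglongrightarrow> L"
    from tendsto_diff[OF this lim0] show "g \<longlonglongrightarrow> L" by simp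
  next
    assume "g \<longlonglongrightarrow> L"
    from tendsto_add[OF this lim0] show "f \<longlonglongrightarrow> L" by simp
  qed
  have "lim f = lim g" unfolding lim_def using iff by simp
  then show ?thesis unfolding htop_def f_def g_def cK_def cE_def by simp
qed

end

theorem mainTheorem6:
  fixes a b :: seq
  assumes "\<not> a 0" and "b 0"
  shows "Fset a b = Kset (shift b) (shift a)
    \<and> (Eset a b \<inter> lex_interval (shift b) (shift a) = Fset a b
         \<and> Fset a b = Kset (shift b) (shift a))
    \<and> htop (Kset (shift b) (shift a)) = htop (Eset a b)"
proof -
  have 1: "Fset a b = Kset (shift b) (shift a)" using F_sub_K K_sub_F assms by blast
  show ?thesis using 1 part2[of a b, OF assms] htop_eq[of a b, OF assms] by blast
qed

end
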